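(* Let $F$ be an $m\times n$ binary matrix. Suppose that, after permuting rows and columns, $F = \left[\begin{array}{ll} A & B\end{array}\right]$ where $A$ is of order $m\times(n-b)$ and $B = O$ is the $m\times b$ zero matrix. Then: (a) if $w(F) = m+b$, then $v(F) = v(A) = \min(m, n-b)$; (b) if $w(A) > \max(m, n-b)$, then $w(F) > m+b$; (c) if $w(F) = m+b$, then $w(A) \leq \max(m, n-b)$.
   Context: A binary matrix is a matrix with entries $0$ or $1$. Some ones of a binary matrix are independent if no two lie in the same row or the same column; $v(F)$ is the maximum number of independent ones of $F$. $w(F)$ is the maximum of $a+b'$ over all $a\times b'$ submatrices of $F$ (formed by a set of $a$ rows and a set of $b'$ columns) all of whose entries are zero; if $F$ has no zero entry, $w(F)=0$. Both $v$ and $w$ are invariant under permutations of rows and columns. *)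

theory Defs
  imports "HOL-Combinatorics.Permutations"
begin

text \<open>An m x n matrix is a function nat => nat => nat, considered on rows {..<m}
  and columns {..<n}. It is binary if all entries there are 0 or 1.\<close>

definition binary_matrix :: "nat \<Rightarrow> nat \<Rightarrow> (nat \<Rightarrow> nat \<Rightarrow> nat) \<Rightarrow> bool" where
  "binary_matrix m n F \<longleftrightarrow> (\<forall>i<m. \<forall>j<n. F i j = 0 \<or> F i j = 1)"

definition indep_ones :: "nat \<Rightarrow> nat \<Rightarrow> (nat \<Rightarrow> nat \<Rightarrow> nat) \<Rightarrow> (nat \<times> nat) set \<Rightarrow> bool" where
  "indep_ones m n F S \<longleftrightarrow> S \<subseteq> {..<m} \<times> {..<n} \<and> (\<forall>(i,j)\<in>S. F i j = 1)
     \<and> inj_on fst S \<and> inj_on snd S"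

definition v :: "nat \<Rightarrow> nat \<Rightarrow> (nat \<Rightarrow> nat \<Rightarrow> nat) \<Rightarrow> nat" where
  "v m n F = Max {card S | S. indep_ones m n F S}"

definition zero_submatrix :: "nat \<Rightarrow> nat \<Rightarrow> (nat \<Rightarrow> nat \<Rightarrow> nat) \<Rightarrow> nat set \<Rightarrow> nat set \<Rightarrow> bool" where
  "zero_submatrix m n F I J \<longleftrightarrow> I \<subseteq> {..<m} \<and> J \<subseteq> {..<n} \<and> I \<noteq> {} \<and> J \<noteq> {}
     \<and> (\<forall>i\<in>I. \<forall>j\<in>J. F i j = 0)"

definition w :: "nat \<Rightarrow> nat \<Rightarrow> (nat \<Rightarrow> nat \<Rightarrow> nat) \<Rightarrow> nat" where
  "w m n F = Max ({card I + card J | I J. zero_submatrix m n F I J} \<union> {0})"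

end

theory Submission
  imports Defs
begin
lemma hall:
  fixes S :: "'a \<Rightarrow> 'b set"
  assumes "finite I" "\<forall>i\<in>I. finite (S i)" "\<forall>K\<subseteq>I. card K \<le> card (\<Union>(S ` K))"
  shows "\<exists>f. inj_on f I \<and> (\<forall>i\<in>I. f i \<in> S i)"
  using assms
proof (induction "card I" arbitrary: I S rule: less_induct)
  case less
  note fin = less.prems(1) and finS = less.prems(2) and cond = less.prems(3)
  show ?case
  proof (cases "I = {}")
    case True then show ?thesis by auto
  next
    case Ine: False
    show ?thesis
    proof (cases "\<exists>K. K \<subset> I \<and> K \<noteq> {} \<and> card (\<Union>(S`K)) \<le> card K")
      case True
      then obtain K where K: "K \<subset> I" "K \<noteq> {}" "card (\<Union>(S`K)) \<le> card K" by blast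
      have fK: "finite K" using K(1) fin finite_subset by blast
      have lt: "card K < card I" using K(1) fin psubset_card_mono by blast
      have "\<exists>g. inj_on g K \<and> (\<forall>i\<in>K. g i \<in> S i)"
        apply (rule less.hyps[OF lt])
        using fK finS cond K(1) by auto
      then obtain g where g: "inj_on g K" "\<forall>i\<in>K. g i \<in> S i" by blast
      define U where "U = \<Union>(S`K)"
      have fU: "finite U" unfolding U_def using fK finS K(1) by auto
      have "K \<subseteq> I" using K(1) by blast
      then have "card K \<le> card U" using cond unfolding U_def by blast
      then have cU: "card U = card K" using K(3) unfolding U_def by linarith
      define S' where "S' = (\<lambda>i. S i - U)"
      have lt2: "card (I - K) < card I"
      proof -
        have "card (I - K) = card I - card K" using K(1) fK by (simp add: card_Diff_subset)
        moreover have "card K > 0" using K(2) fK by (simp add: card_gt_0_iff)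
        ultimately show ?thesis using lt by linarith
      qed
      have "\<exists>h. inj_on h (I - K) \<and> (\<forall>i\<in>I - K. h i \<in> S' i)"
      proof (rule less.hyps[OF lt2])
        show "finite (I - K)" using fin by auto
        show "\<forall>i\<in>I - K. finite (S' i)" using finS unfolding S'_def by auto
        show "\<forall>L\<subseteq>I - K. card L \<le> card (\<Union>(S' ` L))"
        proof (intro allI impI)
          fix L assume L: "L \<subseteq> I - K"
          have fL: "finite L" using L fin finite_subset by blast
          have eq: "\<Union>(S' ` L) = \<Union>(S`(L \<union> K)) - U" unfolding S'_def U_def by auto
          have sub: "U \<subseteq> \<Union>(S`(L \<union> K))" unfolding U_def by auto
          have fLK: "finite (\<Union>(S`(L \<union> K)))" using fL fK finS L K(1) by auto
          have c1: "card (\<Union>(S' ` L)) = card (\<Union>(S`(L \<union> K))) - card U"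
            unfolding eq using sub fU by (simp add: card_Diff_subset)
          have "L \<union> K \<subseteq> I" using L K(1) by auto
          then have "card (L \<union> K) \<le> card (\<Union>(S`(L \<union> K)))" using cond by blast
          moreover have "card (L \<union> K) = card L + card K"
            using fL fK L by (subst card_Un_disjoint) auto
          ultimately show "card L \<le> card (\<Union>(S' ` L))" using c1 cU by linarith
        qed
      qed
      then obtain h where h: "inj_on h (I - K)" "\<forall>i\<in>I - K. h i \<in> S i - U" unfolding S'_def by blast
      define f where "f = (\<lambda>i. if i \<in> K then g i else h i)"
      have "inj_on f I"
        unfolding inj_on_def
      proof (intro ballI impI)
        fix x y assume xy: "x \<in> I" "y \<in> I" "f x = f y"
        show "x = y"
        proof (cases "x \<in> K"; cases "y \<in> K")
          assume "x \<in> K" "y \<in> K" then show ?thesis using xy g(1) unfolding f_def inj_on_def by auto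
        next
          assume a: "x \<in> K" "y \<notin> K"
          then have "g x \<in> U" using g(2) unfolding U_def by auto
          moreover have "h y \<notin> U" using h(2) a xy by auto
          ultimately show ?thesis using xy a unfolding f_def by auto
        next
          assume a: "x \<notin> K" "y \<in> K"
          then have "g y \<in> U" using g(2) unfolding U_def by auto
          moreover have "h x \<notin> U" using h(2) a xy by auto
          ultimately show ?thesis using xy a unfolding f_def by auto
        next
          assume "x \<notin> K" "y \<notin> K" then show ?thesis using xy h(1) unfolding f_def inj_on_def by auto
        qed
      qed
      moreover have "\<forall>i\<in>I. f i \<in> S i" using g h unfolding f_def by auto
      ultimately show ?thesis by blast
    next
      case False
      have strict: "card K < card (\<Union>(S`K))" if "K \<subset> I" "K \<noteq> {}" for K
      proof -
        have "\<not> card (\<Union>(S`K)) \<le> card K" using False that by blast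
        then show ?thesis by simp
      qed
      obtain i0 where i0: "i0 \<in> I" using Ine by blast
      have "card {i0} \<le> card (S i0)" using cond i0 by auto
      then have "S i0 \<noteq> {}" by auto
      then obtain x where x: "x \<in> S i0" by blast
      define S' where "S' = (\<lambda>i. S i - {x})"
      have lt: "card (I - {i0}) < card I" by (rule card_Diff1_less[OF fin i0])
      have "\<exists>h. inj_on h (I - {i0}) \<and> (\<forall>i\<in>I - {i0}. h i \<in> S' i)"
      proof (rule less.hyps[OF lt])
        show "finite (I - {i0})" using fin by auto
        show "\<forall>i\<in>I - {i0}. finite (S' i)" using finS unfolding S'_def by auto
        show "\<forall>L\<subseteq>I - {i0}. card L \<le> card (\<Union>(S' ` L))"
        proof (intro allI impI)
          fix L assume L: "L \<subseteq> I - {i0}"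
          show "card L \<le> card (\<Union>(S' ` L))"
          proof (cases "L = {}")
            case True then show ?thesis by simp
          next
            case False
            have "L \<subset> I" using L i0 by auto
            then have c: "card L < card (\<Union>(S`L))" using strict False by blast
            have fL: "finite L" using L fin finite_subset by blast
            have fU: "finite (\<Union>(S`L))" using fL finS L by auto
            have eq: "\<Union>(S' ` L) = \<Union>(S`L) - {x}" unfolding S'_def by auto
            have "card (\<Union>(S`L) - {x}) \<ge> card (\<Union>(S`L)) - 1"
              using fU by (simp add: card_Diff_singleton_if)
            then show ?thesis using c unfolding eq by linarith
          qed
        qed
      qed
      then obtain h where h: "inj_on h (I - {i0})" "\<forall>i\<in>I - {i0}. h i \<in> S i - {x}" unfolding S'_def by blast
      define f where "f = h(i0 := x)"
      have "inj_on f I"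
        unfolding inj_on_def
      proof (intro ballI impI)
        fix a c assume ac: "a \<in> I" "c \<in> I" "f a = f c"
        show "a = c"
        proof (cases "a = i0"; cases "c = i0")
          assume "a \<noteq> i0" "c \<noteq> i0" then show ?thesis using ac h(1) unfolding f_def inj_on_def by auto
        qed (use ac h(2) in \<open>auto simp: f_def\<close>)
      qed
      moreover have "\<forall>i\<in>I. f i \<in> S i" using h x unfolding f_def by auto
      ultimately show ?thesis by blast
    qed
  qed
qed

lemma indep_card:
  assumes "indep_ones m n F S"
  shows "finite S \<and> card S \<le> m \<and> card S \<le> n"
proof -
  have sub: "S \<subseteq> {..<m} \<times> {..<n}" and i1: "inj_on fst S" and i2: "inj_on snd S"
    using assms unfolding indep_ones_def by auto
  have fin: "finite S" using sub finite_subset by blast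
  have "card S = card (fst ` S)" using i1 by (simp add: card_image)
  also have "\<dots> \<le> card {..<m}" using sub by (intro card_mono) auto
  finally have 1: "card S \<le> m" by simp
  have "card S = card (snd ` S)" using i2 by (simp add: card_image)
  also have "\<dots> \<le> card {..<n}" using sub by (intro card_mono) auto
  finally have 2: "card S \<le> n" by simp
  show ?thesis using fin 1 2 by auto
qed

lemma v_set_fin: "finite {card S | S. indep_ones m n F S}"
  by (rule finite_subset[of _ "{..m}"]) (auto dest: indep_card)

lemma v_ge: "indep_ones m n F S \<Longrightarrow> card S \<le> v m n F"
  unfolding v_def by (rule Max_ge[OF v_set_fin]) auto

lemma v_le:
  assumes "\<And>S. indep_ones m n F S \<Longrightarrow> card S \<le> k"
  shows "v m n F \<le> k"
proof -
  have "indep_ones m n F {}" unfolding indep_ones_def by auto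
  then show ?thesis unfolding v_def using assms
    by (subst Max_le_iff[OF v_set_fin]) auto
qed

lemma w_set_fin: "finite ({card I + card J | I J. zero_submatrix m n F I J} \<union> {0})"
proof -
  have "{card I + card J | I J. zero_submatrix m n F I J} \<subseteq> {..m+n}"
  proof
    fix x assume "x \<in> {card I + card J | I J. zero_submatrix m n F I J}"
    then obtain I J where x: "x = card I + card J" and z: "I \<subseteq> {..<m}" "J \<subseteq> {..<n}"
      unfolding zero_submatrix_def by auto
    have "card I \<le> m" using card_mono[OF _ z(1)] by simp
    moreover have "card J \<le> n" using card_mono[OF _ z(2)] by simp
    ultimately show "x \<in> {..m+n}" using x by simp
  qed
  then have "finite {card I + card J | I J. zero_submatrix m n F I J}"
    by (rule finite_subset) simp
  then show ?thesis by simp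
qed

lemma w_ge: "zero_submatrix m n F I J \<Longrightarrow> card I + card J \<le> w m n F"
  unfolding w_def by (rule Max_ge[OF w_set_fin]) auto

lemma w_obtain:
  assumes "w m n F > 0"
  shows "\<exists>I J. zero_submatrix m n F I J \<and> card I + card J = w m n F"
proof -
  have "w m n F \<in> {card I + card J | I J. zero_submatrix m n F I J} \<union> {0}"
    unfolding w_def by (rule Max_in[OF w_set_fin]) auto
  then have "w m n F \<in> {card I + card J | I J. zero_submatrix m n F I J}" using assms by auto
  then obtain I J where "zero_submatrix m n F I J" "w m n F = card I + card J" by blast
  then show ?thesis by metis
qed

theorem theorem39:
  fixes F :: "nat \<Rightarrow> nat \<Rightarrow> nat" and m n b :: nat
    and \<sigma> \<tau> :: "nat \<Rightarrow> nat"
  assumes bin: "binary_matrix m n F"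
    and b_le: "b \<le> n"
    and \<sigma>: "\<sigma> permutes {..<m}"
    and \<tau>: "\<tau> permutes {..<n}"
    and B_zero: "\<forall>i<m. \<forall>j. n - b \<le> j \<and> j < n \<longrightarrow> F (\<sigma> i) (\<tau> j) = 0"
  defines "A \<equiv> (\<lambda>i j. F (\<sigma> i) (\<tau> j))"
  shows "(w m n F = m + b \<longrightarrow> v m n F = v m (n - b) A \<and> v m (n - b) A = min m (n - b))
       \<and> (w m (n - b) A > max m (n - b) \<longrightarrow> w m n F > m + b)
       \<and> (w m n F = m + b \<longrightarrow> w m (n - b) A \<le> max m (n - b))"
proof -
  define n' where "n' = n - b"
  have sim: "\<sigma> ` {..<m} = {..<m}" using \<sigma> by (rule permutes_image)
  have tim: "\<tau> ` {..<n} = {..<n}" using \<tau> by (rule permutes_image)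
  have sinj: "inj \<sigma>" using \<sigma> by (rule permutes_inj)
  have tinj: "inj \<tau>" using \<tau> by (rule permutes_inj)
  have slt: "\<And>i. i < m \<Longrightarrow> \<sigma> i < m" using sim by auto
  have tlt: "\<And>j. j < n \<Longrightarrow> \<tau> j < n" using tim by auto
  have key: "card I + card J + b \<le> w m n F" if z: "zero_submatrix m n' A I J" for I J
  proof -
    have zI: "I \<subseteq> {..<m}" "I \<noteq> {}" and zJ: "J \<subseteq> {..<n'}" "J \<noteq> {}"
      and z0: "\<forall>i\<in>I. \<forall>j\<in>J. A i j = 0" using z unfolding zero_submatrix_def by auto
    have "zero_submatrix m n F (\<sigma> ` I) (\<tau> ` (J \<union> {n'..<n}))"
      unfolding zero_submatrix_def
    proof (intro conjI)
      show "\<sigma> ` I \<subseteq> {..<m}" using zI slt by auto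
      show "\<tau> ` (J \<union> {n'..<n}) \<subseteq> {..<n}" using zJ tlt unfolding n'_def by auto
      show "\<sigma> ` I \<noteq> {}" using zI by auto
      show "\<tau> ` (J \<union> {n'..<n}) \<noteq> {}" using zJ by auto
      show "\<forall>i\<in>\<sigma> ` I. \<forall>j\<in>\<tau> ` (J \<union> {n'..<n}). F i j = 0"
      proof (intro ballI)
        fix i j assume i: "i \<in> \<sigma> ` I" and j: "j \<in> \<tau> ` (J \<union> {n'..<n})"
        then obtain i0 j0 where ij: "i0 \<in> I" "i = \<sigma> i0" "j0 \<in> J \<union> {n'..<n}" "j = \<tau> j0" by blast
        show "F i j = 0"
        proof (cases "j0 \<in> J")
          case True then show ?thesis using z0 ij unfolding A_def by simp
        next
          case False
          then have c: "n - b \<le> j0" "j0 < n" "i0 < m" using ij zI unfolding n'_def by auto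
          have "F (\<sigma> i0) (\<tau> j0) = 0" using B_zero[rule_format, OF c(3), of j0] c(1,2) by blast
          then show ?thesis using ij by simp
        qed
      qed
    qed
    then have "card (\<sigma> ` I) + card (\<tau> ` (J \<union> {n'..<n})) \<le> w m n F" by (rule w_ge)
    moreover have "card (\<sigma> ` I) = card I" by (rule card_image[OF inj_on_subset[OF sinj subset_UNIV]])
    moreover have "card (\<tau> ` (J \<union> {n'..<n})) = card (J \<union> {n'..<n})" by (rule card_image[OF inj_on_subset[OF tinj subset_UNIV]])
    moreover have "card (J \<union> {n'..<n}) = card J + b"
    proof -
      have "finite J" using zJ finite_subset by blast
      moreover have "J \<inter> {n'..<n} = {}" using zJ by auto
      ultimately have "card (J \<union> {n'..<n}) = card J + card {n'..<n}" by (simp add: card_Un_disjoint)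
      then show ?thesis unfolding n'_def using b_le by simp
    qed
    ultimately show ?thesis by linarith
  qed
  have partb: "w m n' A > max m n' \<longrightarrow> w m n F > m + b"
  proof
    assume a: "w m n' A > max m n'"
    have "w m n' A > 0" using a by simp
    then obtain I J where IJ: "zero_submatrix m n' A I J" "card I + card J = w m n' A"
      using w_obtain[of m n' A] by blast
    have "card I + card J + b \<le> w m n F" by (rule key[OF IJ(1)])
    then show "w m n F > m + b" using IJ(2) a by linarith
  qed
  have partc: "w m n F = m + b \<longrightarrow> w m n' A \<le> max m n'" using partb by auto
  have parta: "v m n F = v m n' A \<and> v m n' A = min m n'" if wF: "w m n F = m + b"
  proof -
    have H: "card I + card J \<le> m" if "zero_submatrix m n' A I J" for I J
      using key[OF that] wF by simp
    have binA: "A i j = 0 \<or> A i j = 1" if "i < m" "j < n'" for i j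
      using bin slt tlt that unfolding binary_matrix_def A_def n'_def by auto
    have ex: "\<exists>S. indep_ones m n' A S \<and> card S = min m n'"
    proof (cases "m \<le> n'")
      case True
      define Sf where "Sf = (\<lambda>i. {j. j < n' \<and> A i j = 1})"
      have "\<exists>f. inj_on f {..<m} \<and> (\<forall>i\<in>{..<m}. f i \<in> Sf i)"
      proof (rule hall)
        show "finite {..<m}" by simp
        show "\<forall>i\<in>{..<m}. finite (Sf i)" unfolding Sf_def by auto
        show "\<forall>K\<subseteq>{..<m}. card K \<le> card (\<Union> (Sf ` K))"
        proof (intro allI impI)
          fix K assume K: "K \<subseteq> {..<m}"
          define N where "N = \<Union> (Sf ` K)"
          have Nsub: "N \<subseteq> {..<n'}" unfolding N_def Sf_def by auto
          have cK: "card K \<le> m" using card_mono[OF _ K] by simp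
          have cN: "card N \<le> n'" using card_mono[OF _ Nsub] by simp
          show "card K \<le> card (\<Union> (Sf ` K))"
          proof (cases "K = {} \<or> N = {..<n'}")
            case True then show ?thesis using cK \<open>m \<le> n'\<close> unfolding N_def by auto
          next
            case False
            have "zero_submatrix m n' A K ({..<n'} - N)"
              unfolding zero_submatrix_def
            proof (intro conjI)
              show "\<forall>i\<in>K. \<forall>j\<in>{..<n'} - N. A i j = 0"
              proof (intro ballI)
                fix i j assume ij: "i \<in> K" "j \<in> {..<n'} - N"
                then have "A i j \<noteq> 1" unfolding N_def Sf_def by auto
                then show "A i j = 0" using binA[of i j] ij K by auto
              qed
            qed (use K False Nsub in auto)
            then have "card K + card ({..<n'} - N) \<le> m" by (rule H)
            moreover have "card ({..<n'} - N) = n' - card N" using Nsub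
              by (simp add: card_Diff_subset finite_subset)
            ultimately show ?thesis using cN \<open>m \<le> n'\<close> unfolding N_def by linarith
          qed
        qed
      qed
      then obtain f where f: "inj_on f {..<m}" "\<forall>i\<in>{..<m}. f i \<in> Sf i" by blast
      define S where "S = (\<lambda>i. (i, f i)) ` {..<m}"
      have "indep_ones m n' A S"
        unfolding indep_ones_def
      proof (intro conjI)
        show "S \<subseteq> {..<m} \<times> {..<n'}" using f(2) unfolding S_def Sf_def by auto
        show "\<forall>(i, j)\<in>S. A i j = 1" using f(2) unfolding S_def Sf_def by auto
        show "inj_on snd S" unfolding inj_on_def S_def
        proof (intro ballI impI)
          fix x y assume xy: "x \<in> (\<lambda>i. (i, f i)) ` {..<m}" "y \<in> (\<lambda>i. (i, f i)) ` {..<m}" "snd x = snd y"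
          then obtain a c where ac: "a < m" "c < m" "x = (a, f a)" "y = (c, f c)" by auto
          then have "f a = f c" using xy by simp
          then have "a = c" using f(1) ac by (simp add: inj_on_def)
          then show "x = y" using ac by simp
        qed
        show "inj_on fst S" unfolding inj_on_def S_def by auto
      qed
      moreover have "card S = m" unfolding S_def
        by (subst card_image) (auto simp: inj_on_def)
      ultimately show ?thesis using True by auto
    next
      case False
      define Sf where "Sf = (\<lambda>j. {i. i < m \<and> A i j = 1})"
      have "\<exists>f. inj_on f {..<n'} \<and> (\<forall>j\<in>{..<n'}. f j \<in> Sf j)"
      proof (rule hall)
        show "finite {..<n'}" by simp
        show "\<forall>i\<in>{..<n'}. finite (Sf i)" unfolding Sf_def by auto
        show "\<forall>K\<subseteq>{..<n'}. card K \<le> card (\<Union> (Sf ` K))"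
        proof (intro allI impI)
          fix K assume K: "K \<subseteq> {..<n'}"
          define N where "N = \<Union> (Sf ` K)"
          have Nsub: "N \<subseteq> {..<m}" unfolding N_def Sf_def by auto
          have cK: "card K \<le> n'" using card_mono[OF _ K] by simp
          have cN: "card N \<le> m" using card_mono[OF _ Nsub] by simp
          show "card K \<le> card (\<Union> (Sf ` K))"
          proof (cases "K = {} \<or> N = {..<m}")
            case True then show ?thesis using cK False unfolding N_def by auto
          next
            case F2: False
            have "zero_submatrix m n' A ({..<m} - N) K"
              unfolding zero_submatrix_def
            proof (intro conjI)
              show "\<forall>i\<in>{..<m} - N. \<forall>j\<in>K. A i j = 0"
              proof (intro ballI)
                fix i j assume ij: "i \<in> {..<m} - N" "j \<in> K"
                then have "A i j \<noteq> 1" unfolding N_def Sf_def by auto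
                then show "A i j = 0" using binA[of i j] ij K by auto
              qed
            qed (use K F2 Nsub in auto)
            then have "card ({..<m} - N) + card K \<le> m" by (rule H)
            moreover have "card ({..<m} - N) = m - card N" using Nsub
              by (simp add: card_Diff_subset finite_subset)
            ultimately show ?thesis using cN unfolding N_def by linarith
          qed
        qed
      qed
      then obtain f where f: "inj_on f {..<n'}" "\<forall>j\<in>{..<n'}. f j \<in> Sf j" by blast
      define S where "S = (\<lambda>j. (f j, j)) ` {..<n'}"
      have "indep_ones m n' A S"
        unfolding indep_ones_def
      proof (intro conjI)
        show "S \<subseteq> {..<m} \<times> {..<n'}" using f(2) unfolding S_def Sf_def by auto
        show "\<forall>(i, j)\<in>S. A i j = 1" using f(2) unfolding S_def Sf_def by auto
        show "inj_on fst S" unfolding inj_on_def S_def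
        proof (intro ballI impI)
          fix x y assume xy: "x \<in> (\<lambda>j. (f j, j)) ` {..<n'}" "y \<in> (\<lambda>j. (f j, j)) ` {..<n'}" "fst x = fst y"
          then obtain a c where ac: "a < n'" "c < n'" "x = (f a, a)" "y = (f c, c)" by auto
          then have "f a = f c" using xy by simp
          then have "a = c" using f(1) ac by (simp add: inj_on_def)
          then show "x = y" using ac by simp
        qed
        show "inj_on snd S" unfolding inj_on_def S_def by auto
      qed
      moreover have "card S = n'" unfolding S_def
        by (subst card_image) (auto simp: inj_on_def)
      ultimately show ?thesis using False by auto
    qed
    then obtain S where S: "indep_ones m n' A S" "card S = min m n'" by blast
    define T where "T = (\<lambda>(i,j). (\<sigma> i, \<tau> j)) ` S"
    have Ssub: "S \<subseteq> {..<m} \<times> {..<n'}" using S(1) unfolding indep_ones_def by auto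
    have "indep_ones m n F T"
      unfolding indep_ones_def
    proof (intro conjI)
      show "T \<subseteq> {..<m} \<times> {..<n}" using Ssub slt tlt unfolding T_def n'_def by auto
      show "\<forall>(i, j)\<in>T. F i j = 1" using S(1) unfolding T_def indep_ones_def A_def by auto
      show "inj_on fst T" unfolding inj_on_def
      proof (intro ballI impI)
        fix x y assume xy: "x \<in> T" "y \<in> T" "fst x = fst y"
        then obtain a1 b1 a2 b2 where p: "(a1,b1) \<in> S" "(a2,b2) \<in> S" "x = (\<sigma> a1, \<tau> b1)" "y = (\<sigma> a2, \<tau> b2)"
          unfolding T_def by auto
        then have "a1 = a2" using xy sinj by (auto simp: inj_def)
        then have "(a1,b1) = (a2,b2)" using S(1) p unfolding indep_ones_def inj_on_def by force
        then show "x = y" using p by simp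
      qed
      show "inj_on snd T" unfolding inj_on_def
      proof (intro ballI impI)
        fix x y assume xy: "x \<in> T" "y \<in> T" "snd x = snd y"
        then obtain a1 b1 a2 b2 where p: "(a1,b1) \<in> S" "(a2,b2) \<in> S" "x = (\<sigma> a1, \<tau> b1)" "y = (\<sigma> a2, \<tau> b2)"
          unfolding T_def by auto
        then have "b1 = b2" using xy tinj by (auto simp: inj_def)
        then have "(a1,b1) = (a2,b2)" using S(1) p unfolding indep_ones_def inj_on_def by force
        then show "x = y" using p by simp
      qed
    qed
    moreover have "card T = card S" unfolding T_def
      using sinj tinj by (subst card_image) (auto simp: inj_on_def inj_def)
    ultimately have vF1: "min m n' \<le> v m n F" using S(2) v_ge by metis
    have vA1: "min m n' \<le> v m n' A" using S v_ge by metis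
    have vA2: "v m n' A \<le> min m n'" by (rule v_le) (auto dest: indep_card)
    have vF2: "v m n F \<le> min m n'"
    proof (rule v_le)
      fix T assume T: "indep_ones m n F T"
      have "snd ` T \<subseteq> \<tau> ` {..<n'}"
      proof
        fix y assume "y \<in> snd ` T"
        then obtain x where xy: "(x, y) \<in> T" by force
        then have xl: "x < m" "y < n" "F x y = 1" using T unfolding indep_ones_def by auto
        have "x \<in> \<sigma> ` {..<m}" using xl(1) sim by simp
        then obtain i' where i': "i' < m" "x = \<sigma> i'" by auto
        have "y \<in> \<tau> ` {..<n}" using xl(2) tim by simp
        then obtain j' where j': "j' < n" "y = \<tau> j'" by auto
        have "j' < n'"
        proof (rule ccontr)
          assume "\<not> j' < n'"
          then have "n - b \<le> j'" unfolding n'_def by simp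
          then have "F (\<sigma> i') (\<tau> j') = 0" using B_zero i'(1) j'(1) by blast
          then show False using xl(3) i'(2) j'(2) by simp
        qed
        then show "y \<in> \<tau> ` {..<n'}" using j' by auto
      qed
      then have "card (snd ` T) \<le> card (\<tau> ` {..<n'})" by (intro card_mono) auto
      also have "\<dots> \<le> card {..<n'}" by (rule card_image_le) simp
      finally have "card (snd ` T) \<le> n'" by simp
      moreover have "card T = card (snd ` T)" using T unfolding indep_ones_def by (simp add: card_image)
      moreover have "card T \<le> m" using indep_card[OF T] by simp
      ultimately show "card T \<le> min m n'" by simp
    qed
    show ?thesis using vF1 vF2 vA1 vA2 by simp
  qed
  show ?thesis using parta partb partc unfolding n'_def by blast
qed

end
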